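(* Let $(E,(\cdot,\cdot),\mathcal H)$ be an extended affine Lie algebra with root system $R$. For $\alpha\in R^\times$ and $\sigma\in R^0$ with $\alpha+\sigma\in R$, we have $\big([E_{\alpha+\sigma},E_{-\alpha}],[E_{-\alpha-\sigma},E_{\alpha}]\big)\neq\{0\}$.
   Context: All Lie algebras are over $\mathbb C$. An extended affine Lie algebra (EALA) is a triple $(E,(\cdot,\cdot),\mathcal H)$ where $E$ is a Lie algebra, $\mathcal H$ a subalgebra and $(\cdot,\cdot)$ a bilinear form on $E$ such that: (EA1) the form is symmetric, non-degenerate and invariant; (EA2) $\mathcal H$ is finite-dimensional, $E=\bigoplus_{\alpha\in\mathcal H^*}E_\alpha$ with $E_\alpha=\{x:[h,x]=\alpha(h)x\ \forall h\in\mathcal H\}$ and $E_0=\mathcal H$; the root system is $R=\{\alpha:E_\alpha\neq0\}$; $t_\alpha\in\mathcal H$ is given by $\alpha(h)=(h,t_\alpha)$, $(\alpha,\beta):=(t_\alpha,t_\beta)$, $R^\times=\{\alpha\in R:(\alpha,\alpha)\neq0\}$, $R^0=R\setminus R^\times$; (EA3) $\mathrm{ad}\,x$ is locally nilpotent for $x\in E_\alpha$, $\alpha\in R^\times$; (EA4) $R$ is discrete in $\mathcal H^*$; (EA5) $R^\times$ is connected (not a union of two nonempty mutually orthogonal subsets) and every isotropic root is non-isolated. Root systems are assumed reduced. *)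

theory Defs
  imports Complex_Main
begin

text \<open>Throughout, the complex vector space \<open>E\<close> is a type \<open>'a::ab_group_add\<close> together
  with a scalar multiplication \<open>sc :: complex \<Rightarrow> 'a \<Rightarrow> 'a\<close> satisfying the module axioms.\<close>

definition bilinear_br :: "(complex \<Rightarrow> 'a::ab_group_add \<Rightarrow> 'a) \<Rightarrow> ('a \<Rightarrow> 'a \<Rightarrow> 'a) \<Rightarrow> bool" where
  "bilinear_br sc g \<longleftrightarrow>
     (\<forall>x y z. g (x + y) z = g x z + g y z) \<and> (\<forall>x y z. g x (y + z) = g x y + g x z) \<and>
     (\<forall>c x y. g (sc c x) y = sc c (g x y)) \<and> (\<forall>c x y. g x (sc c y) = sc c (g x y))"

definition bilinear_form :: "(complex \<Rightarrow> 'a::ab_group_add \<Rightarrow> 'a) \<Rightarrow> ('a \<Rightarrow> 'a \<Rightarrow> complex) \<Rightarrow> bool" where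
  "bilinear_form sc g \<longleftrightarrow>
     (\<forall>x y z. g (x + y) z = g x z + g y z) \<and> (\<forall>x y z. g x (y + z) = g x y + g x z) \<and>
     (\<forall>c x y. g (sc c x) y = c * g x y) \<and> (\<forall>c x y. g x (sc c y) = c * g x y)"

definition lie_algebra :: "(complex \<Rightarrow> 'a::ab_group_add \<Rightarrow> 'a) \<Rightarrow> ('a \<Rightarrow> 'a \<Rightarrow> 'a) \<Rightarrow> bool" where
  "lie_algebra sc br \<longleftrightarrow> module sc \<and> bilinear_br sc br \<and> (\<forall>x. br x x = 0) \<and>
     (\<forall>x y z. br x (br y z) + br y (br z x) + br z (br x y) = 0)"

text \<open>The dual space \<open>H\<^sup>*\<close>: linear functionals on \<open>H\<close>, represented extensionally
  (value 0 outside \<open>H\<close>) so that equality of functionals is equality of functions.\<close>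
definition dual_space :: "(complex \<Rightarrow> 'a::ab_group_add \<Rightarrow> 'a) \<Rightarrow> 'a set \<Rightarrow> ('a \<Rightarrow> complex) set" where
  "dual_space sc H = {\<alpha>. (\<forall>x\<in>H. \<forall>y\<in>H. \<alpha> (x + y) = \<alpha> x + \<alpha> y) \<and>
                      (\<forall>c. \<forall>x\<in>H. \<alpha> (sc c x) = c * \<alpha> x) \<and> (\<forall>x. x \<notin> H \<longrightarrow> \<alpha> x = 0)}"

definition root_space :: "(complex \<Rightarrow> 'a::ab_group_add \<Rightarrow> 'a) \<Rightarrow> ('a \<Rightarrow> 'a \<Rightarrow> 'a) \<Rightarrow> 'a set \<Rightarrow> ('a \<Rightarrow> complex) \<Rightarrow> 'a set" where
  "root_space sc br H \<alpha> = {x. \<forall>h\<in>H. br h x = sc (\<alpha> h) x}"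

definition roots :: "(complex \<Rightarrow> 'a::ab_group_add \<Rightarrow> 'a) \<Rightarrow> ('a \<Rightarrow> 'a \<Rightarrow> 'a) \<Rightarrow> 'a set \<Rightarrow> ('a \<Rightarrow> complex) set" where
  "roots sc br H = {\<alpha> \<in> dual_space sc H. root_space sc br H \<alpha> \<noteq> {0}}"

definition tvec :: "('a \<Rightarrow> 'a \<Rightarrow> complex) \<Rightarrow> 'a set \<Rightarrow> ('a \<Rightarrow> complex) \<Rightarrow> 'a" where
  "tvec form H \<alpha> = (THE t. t \<in> H \<and> (\<forall>h\<in>H. \<alpha> h = form h t))"

definition dual_form :: "('a \<Rightarrow> 'a \<Rightarrow> complex) \<Rightarrow> 'a set \<Rightarrow> ('a \<Rightarrow> complex) \<Rightarrow> ('a \<Rightarrow> complex) \<Rightarrow> complex" where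
  "dual_form form H \<alpha> \<beta> = form (tvec form H \<alpha>) (tvec form H \<beta>)"

definition nonisotropic_roots :: "(complex \<Rightarrow> 'a::ab_group_add \<Rightarrow> 'a) \<Rightarrow> ('a \<Rightarrow> 'a \<Rightarrow> 'a) \<Rightarrow> ('a \<Rightarrow> 'a \<Rightarrow> complex) \<Rightarrow> 'a set \<Rightarrow> ('a \<Rightarrow> complex) set" where
  "nonisotropic_roots sc br form H = {\<alpha> \<in> roots sc br H. dual_form form H \<alpha> \<alpha> \<noteq> 0}"

definition isotropic_roots :: "(complex \<Rightarrow> 'a::ab_group_add \<Rightarrow> 'a) \<Rightarrow> ('a \<Rightarrow> 'a \<Rightarrow> 'a) \<Rightarrow> ('a \<Rightarrow> 'a \<Rightarrow> complex) \<Rightarrow> 'a set \<Rightarrow> ('a \<Rightarrow> complex) set" where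
  "isotropic_roots sc br form H = roots sc br H - nonisotropic_roots sc br form H"

text \<open>Discreteness of a subset of \<open>H\<^sup>*\<close> (\<open>H\<close> finite-dimensional): the (unique Hausdorff
  vector space) topology of \<open>H\<^sup>*\<close> is that of pointwise convergence on a finite spanning set of \<open>H\<close>.\<close>
definition discrete_in_dual :: "(complex \<Rightarrow> 'a::ab_group_add \<Rightarrow> 'a) \<Rightarrow> 'a set \<Rightarrow> ('a \<Rightarrow> complex) set \<Rightarrow> bool" where
  "discrete_in_dual sc H S \<longleftrightarrow> (\<exists>B. finite B \<and> B \<subseteq> H \<and> module.span sc B = H \<and>
     (\<forall>\<alpha>\<in>S. \<exists>\<epsilon>>0. \<forall>\<beta>\<in>S. (\<forall>h\<in>B. cmod (\<beta> h - \<alpha> h) < \<epsilon>) \<longrightarrow> \<beta> = \<alpha>))"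

definition eala :: "(complex \<Rightarrow> 'a::ab_group_add \<Rightarrow> 'a) \<Rightarrow> ('a \<Rightarrow> 'a \<Rightarrow> 'a) \<Rightarrow> ('a \<Rightarrow> 'a \<Rightarrow> complex) \<Rightarrow> 'a set \<Rightarrow> bool" where
  "eala sc br form H \<longleftrightarrow>
     lie_algebra sc br \<and>
     \<comment> \<open>EA1\<close>
     bilinear_form sc form \<and> (\<forall>x y. form x y = form y x) \<and>
     (\<forall>x. (\<forall>y. form x y = 0) \<longrightarrow> x = 0) \<and>
     (\<forall>x y z. form (br x y) z = form x (br y z)) \<and>
     \<comment> \<open>EA2\<close>
     module.subspace sc H \<and> (\<forall>x\<in>H. \<forall>y\<in>H. br x y \<in> H) \<and>
     (\<exists>B. finite B \<and> module.span sc B = H) \<and>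
     (\<forall>x. \<exists>A g. finite A \<and> A \<subseteq> dual_space sc H \<and> (\<forall>\<alpha>\<in>A. g \<alpha> \<in> root_space sc br H \<alpha>) \<and>
              x = (\<Sum>\<alpha>\<in>A. g \<alpha>)) \<and>
     root_space sc br H (\<lambda>_. 0) = H \<and>
     \<comment> \<open>EA3\<close>
     (\<forall>\<alpha>\<in>nonisotropic_roots sc br form H. \<forall>x\<in>root_space sc br H \<alpha>. \<forall>y. \<exists>n. (br x ^^ n) y = 0) \<and>
     \<comment> \<open>EA4\<close>
     discrete_in_dual sc H (roots sc br H) \<and>
     \<comment> \<open>EA5\<close>
     \<not> (\<exists>A B. A \<noteq> {} \<and> B \<noteq> {} \<and> A \<union> B = nonisotropic_roots sc br form H \<and>
              (\<forall>a\<in>A. \<forall>b\<in>B. dual_form form H a b = 0)) \<and>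
     (\<forall>\<sigma>\<in>isotropic_roots sc br form H. \<exists>\<alpha>\<in>nonisotropic_roots sc br form H.
          (\<lambda>h. \<alpha> h + \<sigma> h) \<in> roots sc br H) \<and>
     \<comment> \<open>reduced root system\<close>
     (\<forall>\<alpha>\<in>nonisotropic_roots sc br form H. (\<lambda>h. 2 * \<alpha> h) \<notin> roots sc br H)"

definition bracket_set :: "(complex \<Rightarrow> 'a::ab_group_add \<Rightarrow> 'a) \<Rightarrow> ('a \<Rightarrow> 'a \<Rightarrow> 'a) \<Rightarrow> 'a set \<Rightarrow> 'a set \<Rightarrow> 'a set" where
  "bracket_set sc br A B = module.span sc {br x y | x y. x \<in> A \<and> y \<in> B}"

end

theory Submission
  imports Defs
begin


lemma sl2_weight:
  fixes sc :: "complex \<Rightarrow> 'a::ab_group_add \<Rightarrow> 'a" and E F :: "'a \<Rightarrow> 'a"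
  assumes m: "module sc"
    and E0: "E 0 = 0" and Fsc: "\<And>d x. F (sc d x) = sc d (F x)"
    and comm: "\<And>k. E (F ((F^^k) v)) = F (E ((F^^k) v)) + sc (c - of_nat k * a) ((F^^k) v)"
    and FE: "F (E v) = 0" and nil: "(F^^M) v = 0" and v: "v \<noteq> 0"
  shows "\<exists>n::nat. c = a * of_nat n / 2"
proof -
  have key: "E ((F^^(Suc k)) v) = sc (of_nat (Suc k) * c - a * of_nat k * of_nat (Suc k) / 2) ((F^^k) v)" for k
  proof (induction k)
    case 0
    then show ?case using comm[of 0] FE by simp
  next
    case (Suc k)
    have "E ((F^^(Suc (Suc k))) v) = E (F ((F^^(Suc k)) v))" by simp
    also have "\<dots> = F (E ((F^^(Suc k)) v)) + sc (c - of_nat (Suc k) * a) ((F^^(Suc k)) v)"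
      by (rule comm)
    also have "\<dots> = sc (of_nat (Suc k) * c - a * of_nat k * of_nat (Suc k) / 2) ((F^^(Suc k)) v)
         + sc (c - of_nat (Suc k) * a) ((F^^(Suc k)) v)"
      using Suc by (simp add: Fsc)
    also have "\<dots> = sc (of_nat (Suc k) * c - a * of_nat k * of_nat (Suc k) / 2 + (c - of_nat (Suc k) * a)) ((F^^(Suc k)) v)"
      by (simp add: module.scale_left_distrib[OF m])
    also have "of_nat (Suc k) * c - a * of_nat k * of_nat (Suc k) / 2 + (c - of_nat (Suc k) * a)
       = of_nat (Suc (Suc k)) * c - a * of_nat (Suc k) * of_nat (Suc (Suc k)) / 2"
      by (simp add: field_simps)
    finally show ?case .
  qed
  define M0 where "M0 = (LEAST M. (F^^M) v = 0)"
  have M0: "(F^^M0) v = 0" unfolding M0_def by (rule LeastI[of _ M], rule nil)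
  have "M0 \<noteq> 0" using M0 v by (cases M0) auto
  then obtain m where mm: "M0 = Suc m" by (cases M0) auto
  have nz: "(F^^m) v \<noteq> 0" using not_less_Least[of m "\<lambda>M. (F^^M) v = 0"] mm unfolding M0_def by auto
  have "sc (of_nat (Suc m) * c - a * of_nat m * of_nat (Suc m) / 2) ((F^^m) v) = 0"
    using key[of m] M0 mm E0 by simp
  then have z: "of_nat (Suc m) * c - a * of_nat m * of_nat (Suc m) / 2 = 0"
  proof -
    assume h: "sc (of_nat (Suc m) * c - a * of_nat m * of_nat (Suc m) / 2) ((F^^m) v) = 0"
    show ?thesis
    proof (rule ccontr)
      let ?d = "of_nat (Suc m) * c - a * of_nat m * of_nat (Suc m) / 2"
      assume "?d \<noteq> 0"
      have inv: "\<And>d x. d \<noteq> 0 \<Longrightarrow> sc (1 / d) (sc d x) = x"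
        using module.scale_one[OF m] module.scale_scale[OF m] by simp
      then have "(F^^m) v = sc (1 / ?d) (sc ?d ((F^^m) v))" using \<open>?d \<noteq> 0\<close> by metis
      also have "\<dots> = 0" using h module.scale_zero_right[OF m] by simp
      finally show False using nz by simp
    qed
  qed
  have "of_nat (Suc m) * (c - a * of_nat m / 2) = 0" using z by (simp add: field_simps)
  then have "c = a * of_nat m / 2" by (simp del: of_nat_Suc)
  then show ?thesis by blast
qed



locale EL =
  fixes sc :: "complex \<Rightarrow> 'a::ab_group_add \<Rightarrow> 'a" and br :: "'a \<Rightarrow> 'a \<Rightarrow> 'a"
    and form :: "'a \<Rightarrow> 'a \<Rightarrow> complex" and H :: "'a set"
  assumes EA: "eala sc br form H"
begin

abbreviation rs where "rs \<equiv> root_space sc br H"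

lemma lie: "lie_algebra sc br" by (rule EA[unfolded eala_def, THEN conjunct1])
lemma m: "module sc" using lie unfolding lie_algebra_def by blast
lemma bb: "bilinear_br sc br" using lie unfolding lie_algebra_def by blast
lemma br_addL: "br (x + y) z = br x z + br y z" using bb unfolding bilinear_br_def by blast
lemma br_addR: "br x (y + z) = br x y + br x z" using bb unfolding bilinear_br_def by blast
lemma br_scL: "br (sc c x) y = sc c (br x y)" using bb unfolding bilinear_br_def by blast
lemma br_scR: "br x (sc c y) = sc c (br x y)" using bb unfolding bilinear_br_def by blast
lemma br_alt: "br x x = 0" using lie unfolding lie_algebra_def by blast
lemma jac: "br x (br y z) + br y (br z x) + br z (br x y) = 0" using lie unfolding lie_algebra_def by blast
lemma bf: "bilinear_form sc form" by (rule EA[unfolded eala_def, THEN conjunct2, THEN conjunct1])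
lemma f_addL: "form (x + y) z = form x z + form y z" using bf unfolding bilinear_form_def by blast
lemma f_addR: "form x (y + z) = form x y + form x z" using bf unfolding bilinear_form_def by blast
lemma f_scL: "form (sc c x) y = c * form x y" using bf unfolding bilinear_form_def by blast
lemma f_scR: "form x (sc c y) = c * form x y" using bf unfolding bilinear_form_def by blast
lemma f_sym: "form x y = form y x" using EA[unfolded eala_def, THEN conjunct2, THEN conjunct2, THEN conjunct1] by blast
lemma f_nd: "(\<And>y. form x y = 0) \<Longrightarrow> x = 0" using EA[unfolded eala_def, THEN conjunct2, THEN conjunct2, THEN conjunct2, THEN conjunct1] by blast
lemma f_inv: "form (br x y) z = form x (br y z)" using EA[unfolded eala_def, THEN conjunct2, THEN conjunct2, THEN conjunct2, THEN conjunct2, THEN conjunct1] by blast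
lemma decomp: "\<exists>A g. finite A \<and> A \<subseteq> dual_space sc H \<and> (\<forall>\<alpha>\<in>A. g \<alpha> \<in> rs \<alpha>) \<and> x = (\<Sum>\<alpha>\<in>A. g \<alpha>)"
  using EA[unfolded eala_def, THEN conjunct2, THEN conjunct2, THEN conjunct2, THEN conjunct2, THEN conjunct2, THEN conjunct2, THEN conjunct2, THEN conjunct2, THEN conjunct1] by blast
lemma H0: "rs (\<lambda>_. 0) = H" by (rule EA[unfolded eala_def, THEN conjunct2, THEN conjunct2, THEN conjunct2, THEN conjunct2, THEN conjunct2, THEN conjunct2, THEN conjunct2, THEN conjunct2, THEN conjunct2, THEN conjunct1])
lemma nil: "\<alpha> \<in> nonisotropic_roots sc br form H \<Longrightarrow> x \<in> rs \<alpha> \<Longrightarrow> \<exists>n. (br x ^^ n) y = 0"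
  using EA[unfolded eala_def, THEN conjunct2, THEN conjunct2, THEN conjunct2, THEN conjunct2, THEN conjunct2, THEN conjunct2, THEN conjunct2, THEN conjunct2, THEN conjunct2, THEN conjunct2, THEN conjunct1] by blast

lemma br_zeroL[simp]: "br 0 y = 0"
  using br_addL[of 0 0 y] by simp
lemma br_zeroR[simp]: "br x 0 = 0"
  using br_addR[of x 0 0] by simp
lemma br_negL: "br (- x) y = - br x y"
proof -
  have "br x y + br (- x) y = 0" using br_addL[of x "-x" y] by simp
  then show ?thesis by (metis add_eq_0_iff2 add.commute)
qed
lemma br_negR: "br x (- y) = - br x y"
proof -
  have "br x y + br x (- y) = 0" using br_addR[of x y "-y"] by simp
  then show ?thesis by (metis add_eq_0_iff2 add.commute)
qed
lemma br_anti: "br x y = - br y x"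
proof -
  have "br (x + y) (x + y) = 0" by (rule br_alt)
  then have "br x x + br y x + (br x y + br y y) = 0" by (simp only: br_addL br_addR)
  then have "br y x + br x y = 0" by (simp add: br_alt)
  then show ?thesis by (metis add_eq_0_iff2 add.commute)
qed
lemma f_zeroR[simp]: "form x 0 = 0" using f_addR[of x 0 0] by simp
lemma f_zeroL[simp]: "form 0 x = 0" using f_addL[of 0 0 x] by simp
lemma f_negR: "form x (- y) = - form x y"
proof -
  have "form x y + form x (- y) = 0" using f_addR[of x y "-y"] by simp
  then show ?thesis by (metis add_eq_0_iff2 add.commute)
qed
lemma f_diffR: "form x (y - z) = form x y - form x z"
  using f_addR[of x y "-z"] f_negR by simp
lemma f_sumR: "finite A \<Longrightarrow> form x (sum g A) = (\<Sum>d\<in>A. form x (g d))"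
  by (induction A rule: finite_induct) (auto simp: f_addR)

lemma sc_neg: "- sc d x = sc (- d) x" using module.scale_minus_left[OF m] by simp

lemma rs_zero: "0 \<in> rs \<gamma>" unfolding root_space_def using module.scale_zero_right[OF m] by simp
lemma rs_sc: "x \<in> rs \<gamma> \<Longrightarrow> sc c x \<in> rs \<gamma>"
  unfolding root_space_def using module.scale_left_commute[OF m] by (simp add: br_scR)
lemma rs_add: "x \<in> rs \<gamma> \<Longrightarrow> y \<in> rs \<gamma> \<Longrightarrow> x + y \<in> rs \<gamma>"
  unfolding root_space_def by (simp add: br_addR module.scale_right_distrib[OF m])
lemma rs_neg: "x \<in> rs \<gamma> \<Longrightarrow> - x \<in> rs \<gamma>"
  unfolding root_space_def by (simp add: br_negR module.scale_minus_right[OF m])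
lemma rs_diff: "x \<in> rs \<gamma> \<Longrightarrow> y \<in> rs \<gamma> \<Longrightarrow> x - y \<in> rs \<gamma>"
  using rs_add[of x \<gamma> "-y"] rs_neg by simp
lemma rs_wt: "x \<in> rs \<gamma> \<Longrightarrow> h \<in> H \<Longrightarrow> br h x = sc (\<gamma> h) x"
  unfolding root_space_def by simp

lemma rs_br:
  assumes x: "x \<in> rs \<gamma>" and y: "y \<in> rs \<delta>" and e: "\<And>h. h \<in> H \<Longrightarrow> \<epsilon> h = \<gamma> h + \<delta> h"
  shows "br x y \<in> rs \<epsilon>"
  unfolding root_space_def
proof (intro CollectI ballI)
  fix h assume h: "h \<in> H"
  have "br h (br x y) = - br x (br y h) - br y (br h x)"
    using jac[of h x y] by (simp add: eq_neg_iff_add_eq_0 algebra_simps)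
  also have "\<dots> = sc (\<delta> h) (br x y) + sc (\<gamma> h) (br x y)"
    using rs_wt[OF x h] rs_wt[OF y h] br_anti[of y h] br_anti[of y x]
    by (simp add: br_negR br_scR module.scale_minus_right[OF m])
  also have "\<dots> = sc (\<epsilon> h) (br x y)" using e[OF h] by (simp add: module.scale_left_distrib[OF m] add.commute)
  finally show "br h (br x y) = sc (\<epsilon> h) (br x y)" .
qed

lemma form_orth:
  assumes x: "x \<in> rs \<gamma>" and y: "y \<in> rs \<delta>" and h: "h \<in> H" and ne: "\<gamma> h + \<delta> h \<noteq> 0"
  shows "form x y = 0"
proof -
  have "form (br x h) y = form x (br h y)" by (rule f_inv)
  then have "- form (br h x) y = form x (br h y)" using br_anti[of x h] by (simp add: f_sym f_negR)
  then have "- (\<gamma> h * form x y) = \<delta> h * form x y"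
    using rs_wt[OF x h] rs_wt[OF y h] by (simp add: f_scL f_scR)
  then have "(\<gamma> h + \<delta> h) * form x y = 0" by (simp add: algebra_simps, metis add.commute add_eq_0_iff2)
  then show ?thesis using ne by simp
qed

lemma pair_nd:
  assumes g: "\<gamma> \<in> dual_space sc H" and x: "x \<in> rs \<gamma>"
    and z: "\<And>y. y \<in> rs (\<lambda>h. - \<gamma> h) \<Longrightarrow> form x y = 0"
  shows "x = 0"
proof (rule f_nd)
  fix y
  obtain A g where A: "finite A" "A \<subseteq> dual_space sc H" "\<forall>\<alpha>\<in>A. g \<alpha> \<in> rs \<alpha>" "y = (\<Sum>\<alpha>\<in>A. g \<alpha>)"
    using decomp[of y] by (elim exE conjE) (rule that; assumption)
  have "form x (g d) = 0" if d: "d \<in> A" for d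
  proof (cases "d = (\<lambda>h. - \<gamma> h)")
    case True
    have "g d \<in> rs d" using A(3) d by blast
    then show ?thesis using True z by simp
  next
    case False
    then obtain h where hh: "d h \<noteq> - \<gamma> h" by (meson ext)
    have dd: "d \<in> dual_space sc H" using A(2) d by blast
    have hH: "h \<in> H"
    proof (rule ccontr)
      assume "h \<notin> H"
      moreover have "\<forall>x. x \<notin> H \<longrightarrow> d x = 0" using dd unfolding dual_space_def by blast
      moreover have "\<forall>x. x \<notin> H \<longrightarrow> \<gamma> x = 0" using g unfolding dual_space_def by blast
      ultimately have "d h = 0" "\<gamma> h = 0" by auto
      then show False using hh by simp
    qed
    have ne: "\<gamma> h + d h \<noteq> 0" using hh by (metis add.commute add_eq_0_iff2)
    have "g d \<in> rs d" using A(3) d by blast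
    then show ?thesis using form_orth[of x \<gamma> "g d" d h] x hH ne by blast
  qed
  then show "form x y = 0" using A(1,4) by (simp add: f_sumR)
qed

lemma partner:
  assumes g: "\<gamma> \<in> dual_space sc H" and x: "x \<in> rs \<gamma>" and nz: "x \<noteq> 0"
  shows "\<exists>y\<in>rs (\<lambda>h. - \<gamma> h). form x y = 1"
proof -
  obtain y where y: "y \<in> rs (\<lambda>h. - \<gamma> h)" "form x y \<noteq> 0" using pair_nd[OF g x] nz by blast
  have "sc (1 / form x y) y \<in> rs (\<lambda>h. - \<gamma> h)" using rs_sc[OF y(1)] .
  moreover have "form x (sc (1 / form x y) y) = 1" using y(2) by (simp add: f_scR)
  ultimately show ?thesis by blast
qed

lemma nonzero: "\<gamma> \<in> roots sc br H \<Longrightarrow> \<exists>x\<in>rs \<gamma>. x \<noteq> 0"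
  unfolding roots_def using rs_zero by blast

lemma tvec_eq:
  assumes t: "t \<in> H" and p: "\<And>h. h \<in> H \<Longrightarrow> \<gamma> h = form h t"
  shows "tvec form H \<gamma> = t"
  unfolding tvec_def
proof (rule the_equality)
  show "t \<in> H \<and> (\<forall>h\<in>H. \<gamma> h = form h t)" using t p by blast
next
  fix t' assume t': "t' \<in> H \<and> (\<forall>h\<in>H. \<gamma> h = form h t')"
  have "t' - t = 0"
  proof (rule pair_nd[of "\<lambda>_. 0"])
    show "(\<lambda>_. 0) \<in> dual_space sc H" unfolding dual_space_def by simp
    show "t' - t \<in> rs (\<lambda>_. 0)" using H0 t t' rs_diff by blast
    fix y assume "y \<in> rs (\<lambda>h. - 0)"
    then have "y \<in> H" using H0 by simp
    then show "form (t' - t) y = 0" using t' p by (simp add: f_sym[of _ y] f_diffR)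
  qed
  then show "t' = t" by simp
qed

end


lemma alg: assumes "(a::complex) \<noteq> 0" "- a - s = a * of_nat n1 / 2" "s = a * of_nat n2 / 2" shows False
proof -
  have e1: "a * of_nat n1 = -2*a - 2*s" using assms(2) by (simp add: field_simps)
  have e2: "a * of_nat n2 = 2*s" using assms(3) by (simp add: field_simps)
  have "a * (2 + of_nat n1 + of_nat n2) = 2*a + a * of_nat n1 + a * of_nat n2" by (simp add: algebra_simps)
  also have "\<dots> = 2*a + (-2*a - 2*s) + 2*s" by (simp only: e1 e2)
  also have "\<dots> = 0" by simp
  finally have "a * (2 + of_nat n1 + of_nat n2) = 0" .
  moreover have "(2::complex) + of_nat n1 + of_nat n2 = of_nat (2 + n1 + n2)" by simp
  moreover have "(of_nat (2 + n1 + n2)::complex) \<noteq> 0" by (simp only: of_nat_eq_0_iff)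
  ultimately show False using assms(1) by simp
qed

lemma grp3: "(a::'a::ab_group_add) + b + c = 0 \<Longrightarrow> a = - b - c"
  by (metis add.assoc add_eq_0_iff2 minus_add_distrib diff_conv_add_uminus add.commute)

lemma grp4: "(a::'a::ab_group_add) = b + c \<Longrightarrow> b = a - c"
  by simp

context EL begin

lemma jac2: "br x (br y z) = br y (br x z) + br (br x y) z"
proof -
  have "br x (br y z) = - br y (br z x) - br z (br x y)" by (rule grp3[OF jac])
  also have "br y (br z x) = - br y (br x z)" by (metis br_anti br_negR)
  also have "br z (br x y) = - br (br x y) z" by (rule br_anti)
  finally show ?thesis by simp
qed

lemma f_negL: "form (- x) y = - form x y" using f_negR f_sym by metis

lemma dual_neg: "\<gamma> \<in> dual_space sc H \<Longrightarrow> (\<lambda>h. - \<gamma> h) \<in> dual_space sc H"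
  unfolding dual_space_def by simp
lemma dual_add: "\<gamma> \<in> dual_space sc H \<Longrightarrow> \<delta> \<in> dual_space sc H \<Longrightarrow> (\<lambda>h. \<gamma> h + \<delta> h) \<in> dual_space sc H"
  unfolding dual_space_def by (simp add: algebra_simps)
lemma dual_mm: "\<gamma> \<in> dual_space sc H \<Longrightarrow> \<delta> \<in> dual_space sc H \<Longrightarrow> (\<lambda>h. - \<gamma> h - \<delta> h) \<in> dual_space sc H"
  unfolding dual_space_def by (simp add: algebra_simps)

lemma Fpow: "v \<in> rs \<gamma> \<Longrightarrow> f \<in> rs \<phi> \<Longrightarrow> (br f ^^ k) v \<in> rs (\<lambda>h. \<gamma> h + of_nat k * \<phi> h)"
proof (induction k)
  case 0 then show ?case by simp
next
  case (Suc k)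
  have "br f ((br f ^^ k) v) \<in> rs (\<lambda>h. \<gamma> h + of_nat (Suc k) * \<phi> h)"
    by (rule rs_br[OF Suc.prems(2) Suc.IH[OF Suc.prems]]) (simp add: algebra_simps)
  then show ?case by simp
qed

end


context EL begin

lemma main:
  assumes a: "\<alpha> \<in> nonisotropic_roots sc br form H" and s: "\<sigma> \<in> roots sc br H"
    and b: "(\<lambda>h. \<alpha> h + \<sigma> h) \<in> roots sc br H"
  shows "\<exists>x\<in>rs (\<lambda>h. \<alpha> h + \<sigma> h). \<exists>f\<in>rs (\<lambda>h. - \<alpha> h). \<exists>y\<in>rs (\<lambda>h. - \<alpha> h - \<sigma> h). \<exists>e\<in>rs \<alpha>.
           form (br x f) (br y e) \<noteq> 0"
proof (rule ccontr)
  assume C: "\<not> ?thesis"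
  have C': "form (br x f) (br y e) = 0"
    if "x \<in> rs (\<lambda>h. \<alpha> h + \<sigma> h)" "f \<in> rs (\<lambda>h. - \<alpha> h)" "y \<in> rs (\<lambda>h. - \<alpha> h - \<sigma> h)" "e \<in> rs \<alpha>"
    for x f y e using C that by blast
  have ar: "\<alpha> \<in> roots sc br H" using a unfolding nonisotropic_roots_def by blast
  have ad: "\<alpha> \<in> dual_space sc H" using ar unfolding roots_def by blast
  have aq: "dual_form form H \<alpha> \<alpha> \<noteq> 0" using a unfolding nonisotropic_roots_def by blast
  have sd: "\<sigma> \<in> dual_space sc H" using s unfolding roots_def by blast
  have bd: "(\<lambda>h. \<alpha> h + \<sigma> h) \<in> dual_space sc H" using b unfolding roots_def by blast
  have mbd: "(\<lambda>h. - \<alpha> h - \<sigma> h) \<in> dual_space sc H" by (rule dual_mm[OF ad sd])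
  obtain e0 where e0: "e0 \<in> rs \<alpha>" "e0 \<noteq> 0" using nonzero[OF ar] by blast
  obtain f0 where f0: "f0 \<in> rs (\<lambda>h. - \<alpha> h)" "form e0 f0 = 1" using partner[OF ad e0] by blast
  define t where "t = br e0 f0"
  have "t \<in> rs (\<lambda>_. 0)" unfolding t_def by (rule rs_br[OF e0(1) f0(1)]) simp
  then have tH: "t \<in> H" using H0 by simp
  have tp: "\<alpha> h = form h t" if "h \<in> H" for h
  proof -
    have "form h t = form (br h e0) f0" unfolding t_def by (rule f_inv[symmetric])
    also have "\<dots> = \<alpha> h" using rs_wt[OF e0(1) that] f0(2) by (simp add: f_scL)
    finally show ?thesis by simp
  qed
  have tv: "tvec form H \<alpha> = t" by (rule tvec_eq[OF tH tp])
  define a where "a = \<alpha> t"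
  have a0: "a \<noteq> 0" using aq tv tp[OF tH] unfolding dual_form_def a_def by simp
  have mad: "(\<lambda>h. - \<alpha> h) \<in> dual_space sc H" by (rule dual_neg[OF ad])
  have mtH: "- t \<in> H" using tH H0 rs_neg by blast
  have tvm: "tvec form H (\<lambda>h. - \<alpha> h) = - t"
    by (rule tvec_eq[OF mtH]) (simp add: tp f_negR)
  have f0nz: "f0 \<noteq> 0" using f0(2) by auto
  have "form (- t) (- t) = form t t" by (simp add: f_negR f_negL)
  then have "dual_form form H (\<lambda>h. - \<alpha> h) (\<lambda>h. - \<alpha> h) \<noteq> 0"
    using aq tv tvm unfolding dual_form_def by simp
  then have mar: "(\<lambda>h. - \<alpha> h) \<in> nonisotropic_roots sc br form H"
    unfolding nonisotropic_roots_def roots_def using mad f0(1) f0nz by blast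
  have nilf: "\<exists>n. (br f0 ^^ n) v = 0" for v using nil[OF mar f0(1)] by blast
  have nile: "\<exists>n. (br e0 ^^ n) v = 0" for v using nil[OF a e0(1)] by blast
  have jt: "br e0 (br f0 x) = br f0 (br e0 x) + br t x" for x unfolding t_def by (rule jac2)
  have wt: "br t x = sc (\<gamma> t) x" if "x \<in> rs \<gamma>" for x \<gamma> using rs_wt[OF that tH] .

  have S8: "br f0 (br e0 y) = 0" if y: "y \<in> rs (\<lambda>h. - \<alpha> h - \<sigma> h)" for y
  proof -
    have ye: "br y e0 \<in> rs (\<lambda>h. - \<sigma> h)" by (rule rs_br[OF y e0(1)]) simp
    have "br f0 (br y e0) = 0"
    proof (rule pair_nd[OF mbd])
      show "br f0 (br y e0) \<in> rs (\<lambda>h. - \<alpha> h - \<sigma> h)" by (rule rs_br[OF f0(1) ye]) simp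
      fix z assume z: "z \<in> rs (\<lambda>h. - (- \<alpha> h - \<sigma> h))"
      have eqf: "(\<lambda>h. - (- \<alpha> h - \<sigma> h)) = (\<lambda>h. \<alpha> h + \<sigma> h)" by (rule ext) simp
      have z': "z \<in> rs (\<lambda>h. \<alpha> h + \<sigma> h)" using z unfolding eqf .
      have "form (br f0 (br y e0)) z = form z (br f0 (br y e0))" by (rule f_sym)
      also have "\<dots> = form (br z f0) (br y e0)" by (rule f_inv[symmetric])
      also have "\<dots> = 0" by (rule C'[OF z' f0(1) y e0(1)])
      finally show "form (br f0 (br y e0)) z = 0" .
    qed
    then show ?thesis using br_anti[of e0 y] br_negR by simp
  qed

  have SA: "\<exists>n::nat. - a - \<sigma> t = a * of_nat n / 2" if y: "y \<in> rs (\<lambda>h. - \<alpha> h - \<sigma> h)" "y \<noteq> 0" for y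
  proof -
    obtain M where M: "(br f0 ^^ M) y = 0" using nilf by blast
    have comm: "br e0 (br f0 ((br f0 ^^ k) y)) = br f0 (br e0 ((br f0 ^^ k) y))
        + sc (- a - \<sigma> t - of_nat k * a) ((br f0 ^^ k) y)" for k
    proof -
      have "(br f0 ^^ k) y \<in> rs (\<lambda>h. (- \<alpha> h - \<sigma> h) + of_nat k * (- \<alpha> h))" by (rule Fpow[OF y(1) f0(1)])
      then have "br t ((br f0 ^^ k) y) = sc (- a - \<sigma> t - of_nat k * a) ((br f0 ^^ k) y)"
        using wt unfolding a_def by (simp add: algebra_simps)
      then show ?thesis using jt by simp
    qed
    show ?thesis
      by (rule sl2_weight[where E="br e0" and F="br f0" and v=y and c="- a - \<sigma> t" and a=a and M=M,
            OF m br_zeroR br_scR comm S8[OF y(1)] M y(2)])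
  qed

  have SB: "br e0 y = 0" if y: "y \<in> rs (\<lambda>h. - \<alpha> h - \<sigma> h)" for y
  proof (rule ccontr)
    assume z: "br e0 y \<noteq> 0"
    then have ynz: "y \<noteq> 0" by auto
    obtain n1 where n1: "- a - \<sigma> t = a * of_nat n1 / 2" using SA[OF y ynz] by blast
    have zr: "br e0 y \<in> rs (\<lambda>h. - \<sigma> h)" by (rule rs_br[OF e0(1) y]) simp
    obtain N where N: "(br e0 ^^ N) (br e0 y) = 0" using nile by blast
    have comm: "br f0 (br e0 ((br e0 ^^ k) (br e0 y))) = br e0 (br f0 ((br e0 ^^ k) (br e0 y)))
        + sc (\<sigma> t - of_nat k * a) ((br e0 ^^ k) (br e0 y))" for k
    proof -
      let ?x = "(br e0 ^^ k) (br e0 y)"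
      have "?x \<in> rs (\<lambda>h. - \<sigma> h + of_nat k * \<alpha> h)" by (rule Fpow[OF zr e0(1)])
      then have "br t ?x = sc (- \<sigma> t + of_nat k * a) ?x" using wt unfolding a_def by simp
      then have "- br t ?x = sc (\<sigma> t - of_nat k * a) ?x" using sc_neg by simp
      moreover have "br f0 (br e0 ?x) = br e0 (br f0 ?x) - br t ?x" using grp4[OF jt] .
      ultimately show ?thesis by simp
    qed
    have FE: "br e0 (br f0 (br e0 y)) = 0" using S8[OF y] by simp
    obtain n2 where n2: "\<sigma> t = a * of_nat n2 / 2"
      using sl2_weight[where E="br f0" and F="br e0" and v="br e0 y" and c="\<sigma> t" and a=a and M=N,
            OF m br_zeroR br_scR comm FE N z] by blast
    show False by (rule alg[OF a0 n1 n2])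
  qed

  obtain w where w: "w \<in> rs \<sigma>" "w \<noteq> 0" using nonzero[OF s] by blast
  have ew: "br e0 w \<in> rs (\<lambda>h. \<alpha> h + \<sigma> h)" by (rule rs_br[OF e0(1) w(1)]) simp
  have ew0: "br e0 w = 0"
  proof (rule pair_nd[OF bd ew])
    fix y assume "y \<in> rs (\<lambda>h. - (\<alpha> h + \<sigma> h))"
    then have y: "y \<in> rs (\<lambda>h. - \<alpha> h - \<sigma> h)" by simp
    have "form (br e0 w) y = - form (br w e0) y" using br_anti[of e0 w] by (simp add: f_negL)
    also have "form (br w e0) y = form w (br e0 y)" by (rule f_inv)
    also have "\<dots> = 0" using SB[OF y] by simp
    finally show "form (br e0 w) y = 0" by simp
  qed
  obtain n3 where n3: "\<sigma> t = a * of_nat n3 / 2"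
  proof -
    obtain M where M: "(br f0 ^^ M) w = 0" using nilf by blast
    have comm: "br e0 (br f0 ((br f0 ^^ k) w)) = br f0 (br e0 ((br f0 ^^ k) w))
        + sc (\<sigma> t - of_nat k * a) ((br f0 ^^ k) w)" for k
    proof -
      have "(br f0 ^^ k) w \<in> rs (\<lambda>h. \<sigma> h + of_nat k * (- \<alpha> h))" by (rule Fpow[OF w(1) f0(1)])
      then have "br t ((br f0 ^^ k) w) = sc (\<sigma> t - of_nat k * a) ((br f0 ^^ k) w)"
        using wt unfolding a_def by (simp add: algebra_simps)
      then show ?thesis using jt by simp
    qed
    have FE: "br f0 (br e0 w) = 0" using ew0 by simp
    show ?thesis using that sl2_weight[where E="br e0" and F="br f0" and v=w and c="\<sigma> t" and a=a and M=M,
            OF m br_zeroR br_scR comm FE M w(2)] by blast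
  qed
  obtain x0 where x0: "x0 \<in> rs (\<lambda>h. \<alpha> h + \<sigma> h)" "x0 \<noteq> 0" using nonzero[OF b] by blast
  obtain y0 where y0: "y0 \<in> rs (\<lambda>h. - (\<alpha> h + \<sigma> h))" "form x0 y0 = 1" using partner[OF bd x0] by blast
  have y0': "y0 \<in> rs (\<lambda>h. - \<alpha> h - \<sigma> h)" using y0(1) by simp
  have "y0 \<noteq> 0" using y0(2) by auto
  then obtain n1 where n1: "- a - \<sigma> t = a * of_nat n1 / 2" using SA[OF y0'] by blast
  show False by (rule alg[OF a0 n1 n3])
qed

end

theorem lemma2p8:
  fixes sc :: "complex \<Rightarrow> 'a::ab_group_add \<Rightarrow> 'a" and br :: "'a \<Rightarrow> 'a \<Rightarrow> 'a"
    and form :: "'a \<Rightarrow> 'a \<Rightarrow> complex" and H :: "'a set" and \<alpha> \<sigma> :: "'a \<Rightarrow> complex"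
  assumes "eala sc br form H"
    and "\<alpha> \<in> nonisotropic_roots sc br form H"
    and "\<sigma> \<in> isotropic_roots sc br form H"
    and "(\<lambda>h. \<alpha> h + \<sigma> h) \<in> roots sc br H"
  shows "{form u v | u v.
            u \<in> bracket_set sc br (root_space sc br H (\<lambda>h. \<alpha> h + \<sigma> h)) (root_space sc br H (\<lambda>h. - \<alpha> h)) \<and>
            v \<in> bracket_set sc br (root_space sc br H (\<lambda>h. - \<alpha> h - \<sigma> h)) (root_space sc br H \<alpha>)} \<noteq> {0}"
proof -
  interpret EL sc br form H by (rule EL.intro) (rule assms(1))
  have s: "\<sigma> \<in> roots sc br H" using assms(3) unfolding isotropic_roots_def by blast
  obtain x f y e where xf: "x \<in> root_space sc br H (\<lambda>h. \<alpha> h + \<sigma> h)" "f \<in> root_space sc br H (\<lambda>h. - \<alpha> h)"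
    and ye: "y \<in> root_space sc br H (\<lambda>h. - \<alpha> h - \<sigma> h)" "e \<in> root_space sc br H \<alpha>"
    and nz: "form (br x f) (br y e) \<noteq> 0"
    using main[OF assms(2) s assms(4)] by blast
  have u: "br x f \<in> bracket_set sc br (root_space sc br H (\<lambda>h. \<alpha> h + \<sigma> h)) (root_space sc br H (\<lambda>h. - \<alpha> h))"
    unfolding bracket_set_def by (rule module.span_base[OF m]) (use xf in blast)
  have v: "br y e \<in> bracket_set sc br (root_space sc br H (\<lambda>h. - \<alpha> h - \<sigma> h)) (root_space sc br H \<alpha>)"
    unfolding bracket_set_def by (rule module.span_base[OF m]) (use ye in blast)
  have "form (br x f) (br y e) \<in> {form u v | u v.
            u \<in> bracket_set sc br (root_space sc br H (\<lambda>h. \<alpha> h + \<sigma> h)) (root_space sc br H (\<lambda>h. - \<alpha> h)) \<and>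
            v \<in> bracket_set sc br (root_space sc br H (\<lambda>h. - \<alpha> h - \<sigma> h)) (root_space sc br H \<alpha>)}"
    using u v by blast
  then show ?thesis using nz by auto
qed

end
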